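(* Let $n\geq1$. The monoid $M_n$ is right-cancellative and admits conditional left-lcms: any two elements of $M_n$ that admit a common left-multiple admit a left-lcm. (Equivalently, the opposite monoid $M_n^{\mathrm{op}}$ is left-cancellative and admits conditional right-lcms.)
   Context: $M_n$ denotes the monoid with generators $\rho_1,\dots,\rho_n$ and relations $\rho_1\rho_n\rho_i=\rho_{i+1}\rho_n$ for $1\leq i\leq n-1$. $c$ is a left-multiple of $a$ if $c=ba$ for some $b$. A left-lcm of $a,b$ is a common left-multiple of $a$ and $b$ that right-divides every common left-multiple of $a$ and $b$. *)

theory Defs
  imports Main
begin

text \<open>The monoid M_n is presented by generators rho_1,...,rho_n (encoded as the
letters 1..n) and relations rho_1 rho_n rho_i = rho_(i+1) rho_n for 1 <= i <= n-1.
Elements of M_n are words over {1..n} modulo the congruence generated by the relations.\<close>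

definition Mword :: "nat \<Rightarrow> nat list \<Rightarrow> bool" where
  "Mword n w \<longleftrightarrow> w \<in> lists {1..n}"

definition Mrel :: "nat \<Rightarrow> nat list \<Rightarrow> nat list \<Rightarrow> bool" where
  "Mrel n u v \<longleftrightarrow> (\<exists>i. 1 \<le> i \<and> i \<le> n - 1 \<and> u = [1, n, i] \<and> v = [i + 1, n])"

inductive Meq :: "nat \<Rightarrow> nat list \<Rightarrow> nat list \<Rightarrow> bool" for n where
  rel: "Mrel n u v \<Longrightarrow> Meq n u v"
| refl: "Meq n u u"
| sym: "Meq n u v \<Longrightarrow> Meq n v u"
| trans: "Meq n u v \<Longrightarrow> Meq n v w \<Longrightarrow> Meq n u w"
| ctx: "Meq n u v \<Longrightarrow> Meq n (x @ u @ y) (x @ v @ y)"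

definition Mleft_multiple :: "nat \<Rightarrow> nat list \<Rightarrow> nat list \<Rightarrow> bool" where
  "Mleft_multiple n c a \<longleftrightarrow> (\<exists>b. Mword n b \<and> Meq n c (b @ a))"

definition Mleft_lcm :: "nat \<Rightarrow> nat list \<Rightarrow> nat list \<Rightarrow> nat list \<Rightarrow> bool" where
  "Mleft_lcm n m a b \<longleftrightarrow>
     Mleft_multiple n m a \<and> Mleft_multiple n m b \<and>
     (\<forall>c. Mword n c \<longrightarrow> Mleft_multiple n c a \<longrightarrow> Mleft_multiple n c b \<longrightarrow>
          Mleft_multiple n c m)"

end

theory Submission
  imports Defs
begin

lemmas [trans] = Meq.trans

lemma Meq_sum: "Meq n u v \<Longrightarrow> sum_list u = sum_list v"
  by (induction rule: Meq.induct) (auto simp: Mrel_def)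

lemma Meq_Mword: assumes "Meq n u v" "n \<ge> 1" shows "Mword n u \<longleftrightarrow> Mword n v"
  using assms by (induction rule: Meq.induct) (auto simp: Mrel_def Mword_def)

lemma Mword_app[simp]: "Mword n (a@b) \<longleftrightarrow> Mword n a \<and> Mword n b"
  by (simp add: Mword_def)
lemma Mword_simps[simp]: "Mword n [] " "Mword n (x#xs) \<longleftrightarrow> 1 \<le> x \<and> x \<le> n \<and> Mword n xs"
  by (auto simp add: Mword_def)

lemma Meq_app_right: "Meq n u v \<Longrightarrow> Meq n (u@z) (v@z)"
  using Meq.ctx[of n u v "[]" z] by simp
lemma Meq_app_left: "Meq n u v \<Longrightarrow> Meq n (z@u) (z@v)"
  using Meq.ctx[of n u v z "[]"] by simp

definition stp :: "nat \<Rightarrow> nat list \<Rightarrow> nat list \<Rightarrow> bool" where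
 "stp n u v \<longleftrightarrow> (\<exists>x y l r. u = x@l@y \<and> v = x@r@y \<and> (Mrel n l r \<or> Mrel n r l))"

lemma stp_Meq: "stp n u v \<Longrightarrow> Meq n u v"
  unfolding stp_def by (auto intro: Meq.ctx Meq.rel Meq.sym)
lemma star_Meq: "(stp n)\<^sup>*\<^sup>* u v \<Longrightarrow> Meq n u v"
  by (induction rule: rtranclp_induct) (auto intro: Meq.refl Meq.trans stp_Meq)
lemma stp_sym: "stp n u v \<Longrightarrow> stp n v u" unfolding stp_def by blast
lemma star_sym: "(stp n)\<^sup>*\<^sup>* u v \<Longrightarrow> (stp n)\<^sup>*\<^sup>* v u"
  by (induction rule: rtranclp_induct) (auto intro: converse_rtranclp_into_rtranclp stp_sym)
lemma stp_ctx: "stp n u v \<Longrightarrow> stp n (x@u@y) (x@v@y)"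
  unfolding stp_def
proof (elim exE conjE)
  fix x' y' l r assume "u = x' @ l @ y'" "v = x' @ r @ y'" "Mrel n l r \<or> Mrel n r l"
  then show "\<exists>xa ya l r. x @ u @ y = xa @ l @ ya \<and> x @ v @ y = xa @ r @ ya \<and> (Mrel n l r \<or> Mrel n r l)"
    by (rule_tac x="x@x'" in exI, rule_tac x="y'@y" in exI) auto
qed
lemma star_ctx: "(stp n)\<^sup>*\<^sup>* u v \<Longrightarrow> (stp n)\<^sup>*\<^sup>* (x@u@y) (x@v@y)"
  by (induction rule: rtranclp_induct) (auto intro: rtranclp.rtrancl_into_rtrancl stp_ctx)
lemma Meq_star: "Meq n u v \<Longrightarrow> (stp n)\<^sup>*\<^sup>* u v"
proof (induction rule: Meq.induct)
  case (rel u v)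
  then have "stp n u v" unfolding stp_def by (rule_tac x="[]" in exI, rule_tac x="[]" in exI) auto
  then show ?case by auto
qed (auto intro: star_sym star_ctx)

function cs :: "nat \<Rightarrow> nat \<Rightarrow> nat \<Rightarrow> nat list" where
 "cs n s t = (if n \<le> s then [t+1] else if n \<le> t then [1,n] else cs n (s+1) (t+1) @ [1,n])"
  by auto
termination by (relation "measure (\<lambda>(n,s,t). n - s)") auto
declare cs.simps[simp del]

lemma cs_ni: "cs n n i = [i+1]" by (simp add: cs.simps)
lemma cs_in: "i < n \<Longrightarrow> cs n i n = [1,n]" by (simp add: cs.simps)
lemma cs_rec: "i < n \<Longrightarrow> j < n \<Longrightarrow> cs n i j = cs n (i+1) (j+1) @ [1,n]" by (simp add: cs.simps)

lemma rel_i: "1 \<le> i \<Longrightarrow> i < n \<Longrightarrow> Meq n [1,n,i] [i+1,n]"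
  by (rule Meq.rel) (auto simp: Mrel_def)

lemma cs_lcm: "s \<noteq> t \<Longrightarrow> 1 \<le> s \<Longrightarrow> s \<le> n \<Longrightarrow> 1 \<le> t \<Longrightarrow> t \<le> n \<Longrightarrow>
   Meq n (cs n s t @ [s]) (cs n t s @ [t])"
proof (induction n s t rule: cs.induct)
  case (1 n s t)
  show ?case
  proof (cases "n \<le> s")
    case True
    then have "s = n" "t < n" using 1 by auto
    then show ?thesis using rel_i[of t n] 1 by (auto simp: cs_ni cs_in intro: Meq.sym)
  next
    case False
    show ?thesis
    proof (cases "n \<le> t")
      case True
      then have "t = n" "s < n" using 1 False by auto
      then show ?thesis using rel_i[of s n] 1 by (auto simp: cs_ni cs_in)
    next
      case False2: False
      have sn: "s < n" "t < n" using False False2 by auto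
      have IH: "Meq n (cs n (s+1) (t+1) @ [s+1]) (cs n (t+1) (s+1) @ [t+1])"
        using 1 False False2 by auto
      have "Meq n (cs n s t @ [s]) (cs n (s+1) (t+1) @ [1,n,s])" using sn by (simp add: cs_rec Meq.refl)
      also have "Meq n \<dots> (cs n (s+1) (t+1) @ [s+1] @ [n])"
        using Meq_app_left[OF rel_i[of s n]] 1 sn by simp
      also have "Meq n \<dots> (cs n (t+1) (s+1) @ [t+1] @ [n])"
        using Meq_app_right[OF IH, of "[n]"] by simp
      also have "Meq n \<dots> (cs n (t+1) (s+1) @ [1,n,t])"
        using Meq_app_left[OF Meq.sym[OF rel_i[of t n]]] 1 sn by simp
      also have "Meq n \<dots> (cs n t s @ [t])" using sn by (simp add: cs_rec Meq.refl)
      finally show ?thesis .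
    qed
  qed
qed

lemma cs_Mword: "s \<noteq> t \<Longrightarrow> s \<le> n \<Longrightarrow> t \<le> n \<Longrightarrow> Mword n (cs n s t)"
proof (induction n s t rule: cs.induct)
  case (1 n s t)
  show ?case
  proof (cases "n \<le> s")
    case True
    then have "cs n s t = [t+1]" by (simp add: cs.simps)
    then show ?thesis using 1 True by auto
  next
    case False
    show ?thesis
    proof (cases "n \<le> t")
      case True
      then have "cs n s t = [1,n]" using False by (simp add: cs.simps)
      then show ?thesis using 1 False by auto
    next
      case False2: False
      then have "cs n s t = cs n (s+1) (t+1) @ [1,n]" using False by (simp add: cs.simps)
      then show ?thesis using 1 False False2 by auto
    qed
  qed
qed


definition Inv :: "nat \<Rightarrow> nat list \<Rightarrow> nat \<Rightarrow> nat list \<Rightarrow> nat \<Rightarrow> bool" where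
 "Inv n A s B t \<longleftrightarrow> (s = t \<longrightarrow> Meq n A B) \<and>
    (s \<noteq> t \<longrightarrow> s \<in> {1..n} \<and> t \<in> {1..n} \<and> (\<exists>w. Meq n A (w @ cs n s t) \<and> Meq n B (w @ cs n t s)))"

lemma caseb:
  assumes n1: "n \<ge> 1" and i: "1 \<le> i" "i < n"
  and inv: "Inv n A s (x@[1,n]) i"
  and canc: "\<And>v. Meq n (x@[1,n]) (v@[1,n]) \<Longrightarrow> Meq n x v"
  shows "Inv n A s (x@[i+1]) n"
proof -
  consider "s = i" | "s = n" | "s \<noteq> i" "s \<noteq> n" by blast
  then show ?thesis
  proof cases
    case 1
    then have "Meq n A (x@cs n i n)" using inv i by (simp add: Inv_def cs_in)
    moreover have "Meq n (x@[i+1]) (x @ cs n n i)" by (simp add: cs_ni Meq.refl)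
    ultimately show ?thesis using 1 i unfolding Inv_def by auto
  next
    case 2
    then obtain w where w: "Meq n A (w@cs n n i)" "Meq n (x@[1,n]) (w@cs n i n)"
      using inv i unfolding Inv_def by auto
    then have "Meq n x w" using canc i by (simp add: cs_in)
    then have "Meq n (x@[i+1]) (w@[i+1])" by (rule Meq_app_right)
    then show ?thesis using w 2 unfolding Inv_def by (simp add: cs_ni) (meson Meq.sym Meq.trans)
  next
    case 3
    then obtain w where w: "Meq n A (w@cs n s i)" "Meq n (x@[1,n]) (w@cs n i s)"
      and s: "s \<in> {1..n}" using inv unfolding Inv_def by auto
    have sn: "s < n" using s 3 by auto
    have x: "Meq n x (w @ cs n (i+1) (s+1))" using canc w(2) sn i by (simp add: cs_rec)
    have "Meq n (x@[i+1]) (w @ cs n (i+1) (s+1) @ [i+1])" using Meq_app_right[OF x] by simp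
    also have "Meq n \<dots> (w @ cs n (s+1) (i+1) @ [s+1])"
      using Meq_app_left[OF cs_lcm[of "i+1" "s+1" n]] 3 sn i by simp
    finally have e1: "Meq n (x@[i+1]) ((w @ cs n (s+1) (i+1)) @ cs n n s)" by (simp add: cs_ni)
    have e2: "Meq n A ((w @ cs n (s+1) (i+1)) @ cs n s n)" using w(1) sn i by (simp add: cs_rec cs_in)
    show ?thesis unfolding Inv_def using e1 e2 s 3 n1
      by (auto intro!: exI[of _ "w @ cs n (s+1) (i+1)"])
  qed
qed

lemma casec:
  assumes n1: "n \<ge> 1" and i: "1 \<le> i" "i < n"
  and inv: "Inv n A s (x@[i+1]) n"
  and IHc: "\<And>v t'. Meq n (x@[i+1]) (v@[t']) \<Longrightarrow> Inv n x (i+1) v t'"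
  shows "Inv n A s (x@[1,n]) i"
proof -
  consider "s = n" | "s = i" | "s \<noteq> i" "s \<noteq> n" by blast
  then show ?thesis
  proof cases
    case 1
    then have "Meq n A (x@cs n n i)" using inv i by (simp add: Inv_def cs_ni)
    moreover have "Meq n (x@[1,n]) (x @ cs n i n)" using i by (simp add: cs_in Meq.refl)
    ultimately show ?thesis using 1 i unfolding Inv_def by auto
  next
    case 2
    then obtain w where w: "Meq n A (w@cs n i n)" "Meq n (x@[i+1]) (w@cs n n i)"
      using inv i unfolding Inv_def by auto
    then have "Inv n x (i+1) w (i+1)" using IHc by (simp add: cs_ni)
    then have "Meq n x w" by (simp add: Inv_def)
    then have "Meq n (x@[1,n]) (w@[1,n])" by (rule Meq_app_right)
    then show ?thesis using w 2 i unfolding Inv_def by (simp add: cs_in) (meson Meq.sym Meq.trans)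
  next
    case 3
    then obtain w where w: "Meq n A (w@cs n s n)" "Meq n (x@[i+1]) (w@cs n n s)"
      and s: "s \<in> {1..n}" using inv unfolding Inv_def by auto
    have sn: "s < n" using s 3 by auto
    have "Inv n x (i+1) w (s+1)" using IHc w(2) by (simp add: cs_ni)
    then obtain z where z: "Meq n x (z @ cs n (i+1) (s+1))" "Meq n w (z @ cs n (s+1) (i+1))"
      unfolding Inv_def using 3 by auto
    have e1: "Meq n (x@[1,n]) (z @ cs n i s)" using Meq_app_right[OF z(1), of "[1,n]"] sn i
      by (simp add: cs_rec)
    have "Meq n A (w@[1,n])" using w(1) sn by (simp add: cs_in)
    also have "Meq n \<dots> (z @ cs n s i)" using Meq_app_right[OF z(2), of "[1,n]"] sn i
      by (simp add: cs_rec)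
    finally show ?thesis unfolding Inv_def using e1 s 3 i by auto
  qed
qed


lemma Inv_trans: "Inv n A s B t \<Longrightarrow> Meq n B C \<Longrightarrow> Inv n A s C t"
  unfolding Inv_def by (meson Meq.sym Meq.trans)

lemma main:
  assumes n1: "n \<ge> 1"
  shows "sum_list A + s = W \<Longrightarrow> Meq n (A@[s]) (B@[t]) \<Longrightarrow> Inv n A s B t"
proof (induction W arbitrary: A s B t rule: less_induct)
  case (less W)
  have IH: "\<And>A' s' B' t'. sum_list A' + s' < W \<Longrightarrow> Meq n (A'@[s']) (B'@[t']) \<Longrightarrow> Inv n A' s' B' t'"
    using less.IH by blast
  have path: "(stp n)\<^sup>*\<^sup>* (A@[s]) Z \<Longrightarrow> \<exists>B t. Z = B@[t] \<and> Inv n A s B t" for Z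
  proof (induction rule: rtranclp_induct)
    case base
    then show ?case by (auto simp: Inv_def intro: Meq.refl)
  next
    case (step y z)
    from step.IH obtain B t where y: "y = B@[t]" and inv: "Inv n A s B t" by blast
    have wt: "sum_list B + t = W" using Meq_sum[OF star_Meq[OF step.hyps(1)]] less.prems(1) y by simp
    from step.hyps(2) obtain x yy l r where e: "B@[t] = x@l@yy" "z = x@r@yy"
      and rl: "Mrel n l r \<or> Mrel n r l"
      unfolding stp_def y by blast
    show ?case
    proof (cases yy rule: rev_exhaust)
      case (snoc y' a)
      then have B: "B = x@l@y'" "a = t" using e(1) by auto
      have "stp n B (x@r@y')" unfolding stp_def B using rl by blast
      then have "Inv n A s (x@r@y') t" using inv Inv_trans stp_Meq by blast
      then show ?thesis using e(2) snoc B by auto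
    next
      case Nil
      from rl show ?thesis
      proof
        assume "Mrel n l r"
        then obtain i where i: "1 \<le> i" "i \<le> n - 1" "l = [1,n,i]" "r = [i+1,n]"
          unfolding Mrel_def by blast
        then have B: "t = i" "B = x@[1,n]" using e(1) Nil by auto
        have canc: "Meq n x v" if h: "Meq n (x@[1,n]) (v@[1,n])" for v
        proof -
          have "Inv n (x@[1]) n (v@[1]) n" using IH[of "x@[1]" n "v@[1]" n] h wt B i by simp
          then have "Meq n (x@[1]) (v@[1])" by (simp add: Inv_def)
          then have "Inv n x 1 v 1" using IH[of x 1 v 1] wt B i n1 by simp
          then show ?thesis by (simp add: Inv_def)
        qed
        have "Inv n A s (x@[i+1]) n" using caseb[OF n1 i(1) _ _ canc] i n1 inv B by simp
        then show ?thesis using e(2) Nil i by auto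
      next
        assume "Mrel n r l"
        then obtain i where i: "1 \<le> i" "i \<le> n - 1" "r = [1,n,i]" "l = [i+1,n]"
          unfolding Mrel_def by blast
        then have B: "t = n" "B = x@[i+1]" using e(1) Nil by auto
        have IHc: "Inv n x (i+1) v t'" if h: "Meq n (x@[i+1]) (v@[t'])" for v t'
          using IH[of x "i+1" v t'] h wt B n1 by simp
        have "Inv n A s (x@[1,n]) i" using casec[OF n1 i(1) _ _ IHc] i n1 inv B by simp
        then show ?thesis using e(2) Nil i by (rule_tac x="x@[1,n]" in exI) auto
      qed
    qed
  qed
  from path[OF Meq_star[OF less.prems(2)]] show ?case by auto
qed


lemma rcancel1: "n \<ge> 1 \<Longrightarrow> Meq n (u@[s]) (v@[s]) \<Longrightarrow> Meq n u v"
  using main[of n u s "sum_list u + s" v s] by (simp add: Inv_def)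

lemma rcancel: "n \<ge> 1 \<Longrightarrow> Meq n (a@c) (b@c) \<Longrightarrow> Meq n a b"
proof (induction c arbitrary: a b rule: rev_induct)
  case Nil then show ?case by simp
next
  case (snoc x c) then show ?case using rcancel1[of n "a@c" x "b@c"] by simp
qed

lemma inv2: "n \<ge> 1 \<Longrightarrow> Meq n (u@[s]) (v@[t]) \<Longrightarrow> s \<noteq> t \<Longrightarrow>
   s \<in> {1..n} \<and> t \<in> {1..n} \<and> (\<exists>w. Meq n u (w@cs n s t) \<and> Meq n v (w@cs n t s))"
  using main[of n u s _ v t] by (simp add: Inv_def)

lemma LM_intro: "Mword n b \<Longrightarrow> Meq n c (b@a) \<Longrightarrow> Mleft_multiple n c a"
  unfolding Mleft_multiple_def by blast
lemma LM_app_right: "Mleft_multiple n c a \<Longrightarrow> Mleft_multiple n (c@z) (a@z)"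
  unfolding Mleft_multiple_def using Meq_app_right by fastforce
lemma LM_Meq: "Meq n c c' \<Longrightarrow> Mleft_multiple n c' a \<Longrightarrow> Mleft_multiple n c a"
  unfolding Mleft_multiple_def using Meq.trans by blast
lemma LM_trans: "Mleft_multiple n c m \<Longrightarrow> Mleft_multiple n m a \<Longrightarrow> Mleft_multiple n c a"
  unfolding Mleft_multiple_def
proof (elim exE conjE)
  fix b b' assume h: "Mword n b" "Meq n c (b @ m)" "Mword n b'" "Meq n m (b' @ a)"
  have "Meq n c ((b @ b') @ a)" using h(2) Meq_app_left[OF h(4), of b] Meq.trans by fastforce
  then show "\<exists>b. Mword n b \<and> Meq n c (b @ a)" using h by (intro exI[of _ "b@b'"]) auto
qed
lemma LM_self: "Mleft_multiple n c c"
  using LM_intro[of n "[]" c c] Meq.refl by simp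
lemma LM_suffix: "Mword n b \<Longrightarrow> Mleft_multiple n (b@a) a"
  using LM_intro Meq.refl by blast

lemma lcm_main:
  assumes n1: "n \<ge> 1"
  shows "sum_list c = W \<Longrightarrow> Mword n g \<Longrightarrow> Mword n h \<Longrightarrow> Mword n c \<Longrightarrow>
    Mleft_multiple n c g \<Longrightarrow> Mleft_multiple n c h \<Longrightarrow> \<exists>m. Mword n m \<and> Mleft_lcm n m g h"
proof (induction W arbitrary: g h c rule: less_induct)
  case (less W)
  have IH: "\<And>g h c. sum_list c < W \<Longrightarrow> Mword n g \<Longrightarrow> Mword n h \<Longrightarrow> Mword n c \<Longrightarrow>
    Mleft_multiple n c g \<Longrightarrow> Mleft_multiple n c h \<Longrightarrow> \<exists>m. Mword n m \<and> Mleft_lcm n m g h"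
    using less.IH by blast
  show ?case
  proof (cases h rule: rev_exhaust)
    case Nil
    have "Mleft_multiple n g []" using LM_suffix[of n g "[]"] less.prems by simp
    then show ?thesis using less.prems Nil LM_self
      by (intro exI[of _ g]) (auto simp: Mleft_lcm_def)
  next
    case (snoc h' t)
    have t: "1 \<le> t" "t \<le> n" "Mword n h'" using less.prems snoc by auto
    have "\<exists>m1. Mword n m1 \<and> Mleft_lcm n m1 g [t]"
    proof (cases g rule: rev_exhaust)
      case Nil
      have "Mleft_multiple n [t] []" using LM_suffix[of n "[t]" "[]"] t by simp
      then show ?thesis using t Nil LM_self by (intro exI[of _ "[t]"]) (auto simp: Mleft_lcm_def)
    next
      case (snoc g' s)
      have gs: "1 \<le> s" "s \<le> n" "Mword n g'" using less.prems snoc by auto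
      show ?thesis
      proof (cases "s = t")
        case True
        have "Mleft_multiple n g [t]" using LM_suffix[of n g' "[t]"] gs snoc True by simp
        then show ?thesis using less.prems LM_self by (intro exI[of _ g]) (auto simp: Mleft_lcm_def)
      next
        case False
        from less.prems(5) obtain b1 where b1: "Mword n b1" "Meq n c (b1@g'@[s])"
          unfolding Mleft_multiple_def snoc by auto
        from less.prems(6) obtain b2 where b2: "Mword n b2" "Meq n c (b2@h'@[t])"
          unfolding Mleft_multiple_def \<open>h = h'@[t]\<close> by auto
        have "Meq n ((b1@g')@[s]) ((b2@h')@[t])" using b1 b2 by (simp) (meson Meq.sym Meq.trans)
        from inv2[OF n1 this False] obtain w where w: "Meq n (b1@g') (w@cs n s t)"
          by blast
        have Mw: "Mword n (b1@g'@[s])" using Meq_Mword[OF b1(2) n1] less.prems by simp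
        then have "Mword n (w@cs n s t)" using Meq_Mword[OF w n1] by simp
        then have wM: "Mword n w" by simp
        have csM: "Mword n (cs n s t)" "Mword n (cs n t s)" using cs_Mword False gs t by auto
        have "sum_list (w@cs n s t) = sum_list (b1@g')" using Meq_sum[OF w] by simp
        also have "\<dots> < W" using Meq_sum[OF b1(2)] less.prems(1) gs by simp
        finally have sm: "sum_list (w@cs n s t) < W" .
        have "Mleft_multiple n (w@cs n s t) g'"
          using LM_Meq[OF Meq.sym[OF w] LM_suffix[of n b1 g']] b1 by simp
        moreover have "Mleft_multiple n (w@cs n s t) (cs n s t)" using LM_suffix wM by blast
        ultimately obtain m' where m': "Mword n m'" "Mleft_lcm n m' g' (cs n s t)"
          using IH[OF sm gs(3) csM(1)] Mw Meq_Mword[OF w n1] by auto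
        have L1: "Mleft_multiple n (m'@[s]) g" using m'(2) snoc LM_app_right
          unfolding Mleft_lcm_def by blast
        have "Mleft_multiple n (m'@[s]) (cs n s t @ [s])" using m'(2) LM_app_right
          unfolding Mleft_lcm_def by blast
        moreover have "Mleft_multiple n (cs n s t @ [s]) [t]"
          using LM_Meq[OF cs_lcm[of s t n] LM_suffix[OF csM(2)]] False gs t by simp
        ultimately have L2: "Mleft_multiple n (m'@[s]) [t]" using LM_trans by blast
        have L3: "Mleft_multiple n d (m'@[s])" if d: "Mword n d" "Mleft_multiple n d g"
          "Mleft_multiple n d [t]" for d
        proof -
          from d(2) obtain q where q: "Mword n q" "Meq n d ((q@g')@[s])"
            unfolding Mleft_multiple_def snoc by auto
          from d(3) obtain p where p: "Meq n d (p@[t])" unfolding Mleft_multiple_def by auto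
          have "Meq n ((q@g')@[s]) (p@[t])" using q p by (meson Meq.sym Meq.trans)
          from inv2[OF n1 this False] obtain w2 where w2: "Meq n (q@g') (w2@cs n s t)" by blast
          have qM: "Mword n ((q@g')@[s])" using Meq_Mword[OF q(2) n1] d by simp
          then have "Mword n (w2@cs n s t)" using Meq_Mword[OF w2 n1] by simp
          then have "Mleft_multiple n (q@g') (cs n s t)"
            using LM_Meq[OF w2 LM_suffix[of n w2]] by simp
          moreover have "Mleft_multiple n (q@g') g'" using LM_suffix q by blast
          ultimately have "Mleft_multiple n (q@g') m'" using m'(2) qM
            unfolding Mleft_lcm_def by auto
          then have "Mleft_multiple n ((q@g')@[s]) (m'@[s])" by (rule LM_app_right)
          then show ?thesis using LM_Meq q(2) by blast
        qed
        show ?thesis using L1 L2 L3 m'(1) gs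
          by (intro exI[of _ "m'@[s]"]) (auto simp: Mleft_lcm_def)
      qed
    qed
    then obtain m1 where m1: "Mword n m1" "Mleft_lcm n m1 g [t]" by blast
    from m1(2) obtain t1 where t1: "Mword n t1" "Meq n m1 (t1@[t])"
      unfolding Mleft_lcm_def Mleft_multiple_def by auto
    have m1g: "Mleft_multiple n m1 g" using m1(2) unfolding Mleft_lcm_def by auto
    have m1u: "Mleft_multiple n d m1" if "Mword n d" "Mleft_multiple n d g" "Mleft_multiple n d [t]" for d
      using m1(2) that unfolding Mleft_lcm_def by auto
    have key: "\<exists>pp. Mword n (pp@t1) \<and> Meq n (pp@t1) (q@h') \<and> Meq n d ((pp@t1)@[t])"
      if d: "Mword n d" "Mleft_multiple n d g" "Mword n q" "Meq n d (q@h'@[t])" for d q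
    proof -
      have "Mleft_multiple n d [t]" using LM_intro[of n "q@h'" d "[t]"] d t by simp
      then have "Mleft_multiple n d m1" using m1u d by blast
      then obtain pp where pp: "Mword n pp" "Meq n d (pp@m1)" unfolding Mleft_multiple_def by auto
      have e: "Meq n d ((pp@t1)@[t])" using pp(2) Meq_app_left[OF t1(2), of pp] Meq.trans by fastforce
      then have "Meq n ((pp@t1)@[t]) ((q@h')@[t])" using d(4) by (simp) (meson Meq.sym Meq.trans)
      then have "Meq n (pp@t1) (q@h')" using rcancel1 n1 by blast
      then show ?thesis using e pp t1 by auto
    qed
    from less.prems(6) obtain b2 where b2: "Mword n b2" "Meq n c (b2@h'@[t])"
      unfolding Mleft_multiple_def \<open>h = h'@[t]\<close> by auto
    obtain pp where pp: "Mword n (pp@t1)" "Meq n (pp@t1) (b2@h')" "Meq n c ((pp@t1)@[t])"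
      using key[OF less.prems(4) less.prems(5) b2] by blast
    have "sum_list (pp@t1) < W" using Meq_sum[OF pp(3)] less.prems(1) t by simp
    moreover have "Mleft_multiple n (pp@t1) t1" using LM_suffix pp(1) by simp
    moreover have "Mleft_multiple n (pp@t1) h'" using LM_intro[OF b2(1) pp(2)] .
    ultimately obtain m2 where m2: "Mword n m2" "Mleft_lcm n m2 t1 h'"
      using IH[of "pp@t1" t1 h'] pp(1) t1(1) t by auto
    have L1: "Mleft_multiple n (m2@[t]) g"
    proof -
      have "Mleft_multiple n (m2@[t]) (t1@[t])" using m2(2) LM_app_right unfolding Mleft_lcm_def by blast
      moreover have "Mleft_multiple n (t1@[t]) m1" using LM_Meq[OF Meq.sym[OF t1(2)] LM_self] .
      ultimately show ?thesis using m1g LM_trans by blast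
    qed
    have L2: "Mleft_multiple n (m2@[t]) h" using m2(2) LM_app_right snoc unfolding Mleft_lcm_def by blast
    have L3: "Mleft_multiple n d (m2@[t])" if d: "Mword n d" "Mleft_multiple n d g"
          "Mleft_multiple n d h" for d
    proof -
      from d(3) obtain q where q: "Mword n q" "Meq n d (q@h'@[t])"
        unfolding Mleft_multiple_def snoc by auto
      obtain pp where pp: "Mword n (pp@t1)" "Meq n (pp@t1) (q@h')" "Meq n d ((pp@t1)@[t])"
        using key[OF d(1) d(2) q] by blast
      have "Mleft_multiple n (pp@t1) t1" using LM_suffix pp(1) by simp
      moreover have "Mleft_multiple n (pp@t1) h'" using LM_intro[OF q(1) pp(2)] .
      ultimately have "Mleft_multiple n (pp@t1) m2" using m2(2) pp(1) unfolding Mleft_lcm_def by auto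
      then have "Mleft_multiple n ((pp@t1)@[t]) (m2@[t])" by (rule LM_app_right)
      then show ?thesis using LM_Meq pp(3) by blast
    qed
    show ?thesis using L1 L2 L3 m2(1) t
      by (intro exI[of _ "m2@[t]"]) (auto simp: Mleft_lcm_def)
  qed
qed

theorem proposition4p12:
  fixes n :: nat
  assumes "n \<ge> 1"
  shows "(\<forall>a b c. Mword n a \<longrightarrow> Mword n b \<longrightarrow> Mword n c \<longrightarrow>
            Meq n (a @ c) (b @ c) \<longrightarrow> Meq n a b)
       \<and> (\<forall>a b. Mword n a \<longrightarrow> Mword n b \<longrightarrow>
            (\<exists>c. Mword n c \<and> Mleft_multiple n c a \<and> Mleft_multiple n c b) \<longrightarrow>
            (\<exists>m. Mword n m \<and> Mleft_lcm n m a b))"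
  using rcancel[OF assms] lcm_main[OF assms] by blast

end
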